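(* Let $(Z,d)$ be an infinite compact metric space and $\Gamma$ an essential approximation graph for $Z$. Then $\mathcal I_\Gamma$ is a dense $G_\delta$-subset of $\mathcal P_\Gamma$.
   Context: A refining sequence is a sequence $(\mathcal V_n)_{n\ge0}$ of finite covers of $Z$, all open or all closed with nonempty interiors, with $\mathcal V_0=\{Z\}$, each element of $\mathcal V_{n+1}$ contained in some element of $\mathcal V_n$, and $\max_{v\in\mathcal V_n}\operatorname{diam}v\to0$. Its approximation graph $\Gamma$ has vertices $\coprod_n\mathcal V_n$ and an edge from $v_n\in\mathcal V_n$ to $v_{n+1}\in\mathcal V_{n+1}$ whenever $v_{n+1}\subset v_n$. The infinite path space $\mathcal P_\Gamma$ is the set of sequences of edges $(p_n)_{n\ge0}$, $p_n$ from some $v_n\in\mathcal V_n$ to some $v_{n+1}\in\mathcal V_{n+1}$, consecutive edges sharing their common vertex, with the compact topology generated by cylinder sets (paths with prescribed first finitely many edges). With $r(p_n)=v_{n+1}$, $\pi_\Gamma(\tilde p)$ is the unique point of $\bigcap_n\operatorname{cl}(r(p_n))$. $\mathcal I_\Gamma=\{\tilde p\in\mathcal P_\Gamma:\#\pi_\Gamma^{-1}(\pi_\Gamma(\tilde p))=1\}$. Overlapping set $\mathcal Y_n=\{\operatorname{cl}(v)\cap\operatorname{cl}(w):v\ne w\in\mathcal V_n\}$; $v^{\mathrm{ess}}=\operatorname{int}(v)\setminus\bigcup\mathcal Y_n$, $\mathcal V_n^{\mathrm{ess}}=\{v^{\mathrm{ess}}:v\in\mathcal V_n\}$. $\Gamma$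 is regular if for every $n\in\mathbb N$ and $v\in\mathcal V_n$: $v=\bigcup\{w\in\mathcal V_{n+1}:w\subset v\}$ and $v^{\mathrm{ess}}\ne\varnothing$. $\Gamma$ is essential if it is regular, consists of closed covers, and $\bigcup\mathcal V_n^{\mathrm{ess}}$ is dense in $Z$ for every $n\in\mathbb N$. *)

theory Defs
  imports "HOL-Analysis.Analysis"
begin

text \<open>The compact metric space Z is the whole of the type 'a (a metric space with
  compact UNIV). A sequence of covers is V :: nat => 'a set set.\<close>

definition refining_sequence :: "(nat \<Rightarrow> 'a::metric_space set set) \<Rightarrow> bool" where
  "refining_sequence V \<longleftrightarrow>
     (\<forall>n. finite (V n) \<and> \<Union>(V n) = UNIV \<and> (\<forall>v\<in>V n. interior v \<noteq> {})) \<and>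
     ((\<forall>n. \<forall>v\<in>V n. open v) \<or> (\<forall>n. \<forall>v\<in>V n. closed v)) \<and>
     V 0 = {UNIV} \<and>
     (\<forall>n. \<forall>w\<in>V (Suc n). \<exists>v\<in>V n. w \<subseteq> v) \<and>
     (\<lambda>n. Max (diameter ` V n)) \<longlonglongrightarrow> 0"

definition graph_edges :: "(nat \<Rightarrow> 'a set set) \<Rightarrow> nat \<Rightarrow> ('a set \<times> 'a set) set" where
  "graph_edges V n = {(v, w). v \<in> V n \<and> w \<in> V (Suc n) \<and> w \<subseteq> v}"

definition path_space :: "(nat \<Rightarrow> 'a set set) \<Rightarrow> (nat \<Rightarrow> 'a set \<times> 'a set) set" where
  "path_space V = {p. (\<forall>n. p n \<in> graph_edges V n) \<and> (\<forall>n. snd (p n) = fst (p (Suc n)))}"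

definition cylinder_sets :: "(nat \<Rightarrow> 'a set set) \<Rightarrow> (nat \<Rightarrow> 'a set \<times> 'a set) set set" where
  "cylinder_sets V = {{q \<in> path_space V. \<forall>i<k. q i = p i} | p k. p \<in> path_space V}"

definition path_topology :: "(nat \<Rightarrow> 'a set set) \<Rightarrow> (nat \<Rightarrow> 'a set \<times> 'a set) topology" where
  "path_topology V = topology_generated_by (cylinder_sets V)"

definition path_proj :: "(nat \<Rightarrow> 'a::topological_space set \<times> 'a set) \<Rightarrow> 'a" where
  "path_proj p = (THE x. x \<in> (\<Inter>n. closure (snd (p n))))"

definition injectivity_set :: "(nat \<Rightarrow> 'a::topological_space set set) \<Rightarrow> (nat \<Rightarrow> 'a set \<times> 'a set) set" where
  "injectivity_set V = {p \<in> path_space V.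
      card {q \<in> path_space V. path_proj q = path_proj p} = 1}"

definition overlapping_set :: "(nat \<Rightarrow> 'a::topological_space set set) \<Rightarrow> nat \<Rightarrow> 'a set set" where
  "overlapping_set V n = {closure v \<inter> closure w | v w. v \<in> V n \<and> w \<in> V n \<and> v \<noteq> w}"

definition ess :: "(nat \<Rightarrow> 'a::topological_space set set) \<Rightarrow> nat \<Rightarrow> 'a set \<Rightarrow> 'a set" where
  "ess V n v = interior v - \<Union>(overlapping_set V n)"

definition regular_graph :: "(nat \<Rightarrow> 'a::topological_space set set) \<Rightarrow> bool" where
  "regular_graph V \<longleftrightarrow> (\<forall>n. \<forall>v\<in>V n.
      v = \<Union>{w \<in> V (Suc n). w \<subseteq> v} \<and> ess V n v \<noteq> {})"

definition essential_graph :: "(nat \<Rightarrow> 'a::topological_space set set) \<Rightarrow> bool" where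
  "essential_graph V \<longleftrightarrow> regular_graph V \<and> (\<forall>n. \<forall>v\<in>V n. closed v) \<and>
      (\<forall>n. closure (\<Union>v\<in>V n. ess V n v) = UNIV)"

end

theory Submission
  imports Defs
begin

lemma ps_props:
  assumes "p \<in> path_space V"
  shows "fst (p n) \<in> V n" "snd (p n) \<in> V (Suc n)" "snd (p n) \<subseteq> fst (p n)"
    "fst (p (Suc n)) = snd (p n)"
  using assms unfolding path_space_def graph_edges_def by (auto simp: case_prod_beta)

lemma ps_dec:
  assumes "p \<in> path_space V" "m \<le> n"
  shows "fst (p n) \<subseteq> fst (p m)"
proof -
  have "decseq (\<lambda>n. fst (p n))"
    by (rule decseq_SucI) (metis ps_props(3,4)[OF assms(1)])
  thus ?thesis using assms(2) by (simp add: decseq_def)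
qed

lemma chain_ps:
  assumes "\<And>m. f m \<in> V m" "\<And>m. f (Suc m) \<subseteq> f m"
  shows "(\<lambda>m. (f m, f (Suc m))) \<in> path_space V"
  using assms by (auto simp: path_space_def graph_edges_def)

context
  fixes V :: "nat \<Rightarrow> 'a::metric_space set set"
  assumes cpt: "compact (UNIV :: 'a set)"
    and R: "refining_sequence V"
    and E: "essential_graph V"
begin

lemma cl: "v \<in> V n \<Longrightarrow> closed v"
  using E by (auto simp: essential_graph_def)

lemma fin: "finite (V n)"
  using R by (simp add: refining_sequence_def)

lemma V0: "V 0 = {UNIV}"
  using R by (simp add: refining_sequence_def)

lemma ne: "v \<in> V n \<Longrightarrow> v \<noteq> {}"
  using R unfolding refining_sequence_def by (metis interior_empty)

lemma refine: "w \<in> V (Suc n) \<Longrightarrow> \<exists>v\<in>V n. w \<subseteq> v"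
  using R by (simp add: refining_sequence_def)

lemma reg: "v \<in> V n \<Longrightarrow> v = \<Union>{w \<in> V (Suc n). w \<subseteq> v}"
  using E by (simp add: essential_graph_def regular_graph_def)

lemma essne: "v \<in> V n \<Longrightarrow> ess V n v \<noteq> {}"
  using E by (simp add: essential_graph_def regular_graph_def)

lemma bdd: "bounded (S::'a set)"
  using compact_imp_bounded[OF cpt] bounded_subset by blast

lemma lim: "(\<lambda>n. Max (diameter ` V n)) \<longlonglongrightarrow> 0"
  using R by (simp add: refining_sequence_def)

lemma diam_le: "v \<in> V n \<Longrightarrow> x \<in> v \<Longrightarrow> y \<in> v \<Longrightarrow> dist x y \<le> Max (diameter ` V n)"
proof -
  assume a: "v \<in> V n" "x \<in> v" "y \<in> v"
  have "dist x y \<le> diameter v" using diameter_bounded_bound[OF bdd] a by blast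
  also have "\<dots> \<le> Max (diameter ` V n)" using fin a by (intro Max_ge) auto
  finally show ?thesis .
qed

lemma proj_unique:
  assumes p: "p \<in> path_space V"
  shows "\<exists>!x. \<forall>n. x \<in> snd (p n)"
proof (rule ex_ex1I)
  have "(\<Inter>n. snd (p n)) \<noteq> {}"
  proof (rule compact_space_imp_nest[of euclidean])
    show "compact_space (euclidean::'a topology)" using cpt by (simp add: compact_space_def)
    show "closedin euclidean (snd (p n))" for n using cl[OF ps_props(2)[OF p]] by simp
    show "snd (p n) \<noteq> {}" for n using ne ps_props(2)[OF p, of n] by blast
    show "decseq (\<lambda>n. snd (p n))" by (rule decseq_SucI) (metis ps_props(3,4)[OF p])
  qed
  thus "\<exists>x. \<forall>n. x \<in> snd (p n)" by blast
next
  fix x y assume x: "\<forall>n. x \<in> snd (p n)" and y: "\<forall>n. y \<in> snd (p n)"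
  have "dist x y \<le> Max (diameter ` V (Suc n))" for n
    using diam_le[OF ps_props(2)[OF p]] x y by blast
  moreover have "(\<lambda>n. Max (diameter ` V (Suc n))) \<longlonglongrightarrow> 0" using LIMSEQ_Suc[OF lim] .
  ultimately have "dist x y \<le> 0"
    by (intro LIMSEQ_le_const[of "\<lambda>n. Max (diameter ` V (Suc n))"]) auto
  thus "x = y" by simp
qed

lemma proj_iff:
  assumes p: "p \<in> path_space V"
  shows "path_proj p = x \<longleftrightarrow> (\<forall>n. x \<in> snd (p n))"
proof -
  have "closure (snd (p n)) = snd (p n)" for n using cl ps_props(2)[OF p] closure_closed by blast
  hence eq: "path_proj p = (THE x. \<forall>n. x \<in> snd (p n))" by (simp add: path_proj_def)
  show ?thesis
  proof
    assume "path_proj p = x"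
    thus "\<forall>n. x \<in> snd (p n)" using theI'[OF proj_unique[OF p]] eq by simp
  next
    assume "\<forall>n. x \<in> snd (p n)"
    thus "path_proj p = x" using the1_equality[OF proj_unique[OF p]] eq by simp
  qed
qed

lemma snd_fst_iff:
  assumes p: "p \<in> path_space V"
  shows "(\<forall>n. x \<in> snd (p n)) \<longleftrightarrow> (\<forall>n. x \<in> fst (p n))"
proof
  assume a: "\<forall>n. x \<in> snd (p n)"
  show "\<forall>n. x \<in> fst (p n)"
  proof
    fix n show "x \<in> fst (p n)"
    proof (cases n)
      case 0 then show ?thesis using ps_props(1)[OF p, of 0] V0 by auto
    next
      case (Suc m) then show ?thesis using a ps_props(4)[OF p, of m] by auto
    qed
  qed
next
  assume a: "\<forall>n. x \<in> fst (p n)"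
  show "\<forall>n. x \<in> snd (p n)"
  proof
    fix n
    have "x \<in> fst (p (Suc n))" using a by blast
    thus "x \<in> snd (p n)" using ps_props(4)[OF p, of n] by simp
  qed
qed

lemma down_ext:
  assumes f1: "\<And>m. m \<le> k \<Longrightarrow> f m \<in> V m" and f2: "\<And>m. m < k \<Longrightarrow> f (Suc m) \<subseteq> f m"
    and x: "x \<in> f k"
  shows "\<exists>g. (\<forall>m. g m \<in> V m) \<and> (\<forall>m. g (Suc m) \<subseteq> g m) \<and> (\<forall>m\<le>k. g m = f m)
      \<and> (\<forall>m\<ge>k. x \<in> g m)"
proof -
  define g where "g = rec_nat (f 0) (\<lambda>m gm. if Suc m \<le> k then f (Suc m)
     else SOME w. w \<in> V (Suc m) \<and> w \<subseteq> gm \<and> x \<in> w)"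
  have g0: "g 0 = f 0" and gS: "g (Suc m) = (if Suc m \<le> k then f (Suc m)
     else SOME w. w \<in> V (Suc m) \<and> w \<subseteq> g m \<and> x \<in> w)" for m
    by (simp_all add: g_def)
  have P: "g m \<in> V m \<and> (m \<le> k \<longrightarrow> g m = f m) \<and> (k \<le> m \<longrightarrow> x \<in> g m)
       \<and> g (Suc m) \<subseteq> g m" for m
  proof (induction m)
    case 0
    have "g 0 \<in> V 0" using f1[of 0] g0 by simp
    moreover have "k \<le> 0 \<longrightarrow> x \<in> g 0" using x g0 by auto
    moreover have "g (Suc 0) \<subseteq> g 0"
    proof (cases "Suc 0 \<le> k")
      case True then show ?thesis using gS[of 0] g0 f2[of 0] by auto
    next
      case False
      hence k0: "k = 0" by simp
      have "x \<in> g 0" using x g0 k0 by simp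
      then obtain w where "w \<in> V (Suc 0) \<and> w \<subseteq> g 0 \<and> x \<in> w"
        using reg[of "g 0" 0] \<open>g 0 \<in> V 0\<close> by blast
      hence "(SOME w. w \<in> V (Suc 0) \<and> w \<subseteq> g 0 \<and> x \<in> w) \<subseteq> g 0"
        by (metis (mono_tags, lifting) someI_ex)
      thus ?thesis using gS[of 0] False by simp
    qed
    ultimately show ?case using g0 by simp
  next
    case (Suc m)
    have A: "g (Suc m) \<in> V (Suc m) \<and> (k \<le> Suc m \<longrightarrow> x \<in> g (Suc m))"
    proof (cases "Suc m \<le> k")
      case True
      hence "g (Suc m) = f (Suc m)" using gS[of m] by simp
      moreover have "k \<le> Suc m \<longrightarrow> k = Suc m" using True by simp
      ultimately show ?thesis using f1[OF True] x by auto
    next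
      case False
      hence "k \<le> m" by simp
      hence "x \<in> g m" using Suc.IH by blast
      then obtain w where "w \<in> V (Suc m) \<and> w \<subseteq> g m \<and> x \<in> w"
        using reg[of "g m" m] Suc.IH by blast
      hence "let w = (SOME w. w \<in> V (Suc m) \<and> w \<subseteq> g m \<and> x \<in> w) in
          w \<in> V (Suc m) \<and> w \<subseteq> g m \<and> x \<in> w"
        unfolding Let_def by (rule someI)
      thus ?thesis using gS[of m] False by (simp add: Let_def)
    qed
    have B: "g (Suc (Suc m)) \<subseteq> g (Suc m)"
    proof (cases "Suc (Suc m) \<le> k")
      case True then show ?thesis using gS[of m] gS[of "Suc m"] f2[of "Suc m"] by auto
    next
      case False
      hence "k \<le> Suc m" by simp
      hence "x \<in> g (Suc m)" using A by blast
      then obtain w where "w \<in> V (Suc (Suc m)) \<and> w \<subseteq> g (Suc m) \<and> x \<in> w"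
        using reg[of "g (Suc m)" "Suc m"] A by blast
      hence "(SOME w. w \<in> V (Suc (Suc m)) \<and> w \<subseteq> g (Suc m) \<and> x \<in> w) \<subseteq> g (Suc m)"
        by (metis (mono_tags, lifting) someI_ex)
      thus ?thesis using gS[of "Suc m"] False by simp
    qed
    show ?case using A B gS[of m] by auto
  qed
  show ?thesis
  proof (intro exI[of _ g] conjI allI impI)
    fix m
    show "g m \<in> V m" using P[of m] by blast
    show "g (Suc m) \<subseteq> g m" using P[of m] by blast
  next
    fix m assume "m \<le> k" thus "g m = f m" using P[of m] by blast
  next
    fix m assume "k \<le> m" thus "x \<in> g m" using P[of m] by blast
  qed
qed

lemma up_ext:
  "w \<in> V n \<Longrightarrow> \<exists>f. (\<forall>m\<le>n. f m \<in> V m) \<and> (\<forall>m<n. f (Suc m) \<subseteq> f m) \<and> f n = w"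
proof (induction n arbitrary: w)
  case 0
  then show ?case by (intro exI[of _ "\<lambda>_. w"]) auto
next
  case (Suc n)
  obtain v where v: "v \<in> V n" "w \<subseteq> v" using refine[OF Suc.prems] by blast
  obtain f where f: "\<forall>m\<le>n. f m \<in> V m" "\<forall>m<n. f (Suc m) \<subseteq> f m" "f n = v"
    using Suc.IH[OF v(1)] by blast
  show ?case
  proof (intro exI[of _ "f(Suc n := w)"] conjI allI impI)
    fix m assume "m \<le> Suc n" thus "(f(Suc n := w)) m \<in> V m"
      using f(1) Suc.prems by (cases "m = Suc n") auto
  next
    fix m assume m: "m < Suc n"
    show "(f(Suc n := w)) (Suc m) \<subseteq> (f(Suc n := w)) m"
    proof (cases "m = n")
      case True then show ?thesis using f(3) v(2) by simp
    next
      case False then show ?thesis using f(2) m by simp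
    qed
  qed simp
qed

lemma chain_dec: "(\<And>m. g (Suc m) \<subseteq> g m) \<Longrightarrow> m \<le> n \<Longrightarrow> g n \<subseteq> (g m :: 'b set)"
  using decseq_SucI[of g] by (simp add: decseq_def)

lemma path_through:
  assumes w: "w \<in> V n" and x: "x \<in> w"
  shows "\<exists>q\<in>path_space V. fst (q n) = w \<and> (\<forall>m. x \<in> snd (q m))"
proof -
  obtain f where f: "\<forall>m\<le>n. f m \<in> V m" "\<forall>m<n. f (Suc m) \<subseteq> f m" "f n = w"
    using up_ext[OF w] by blast
  obtain g where g: "\<forall>m. g m \<in> V m" "\<forall>m. g (Suc m) \<subseteq> g m" "\<forall>m\<le>n. g m = f m"
      "\<forall>m\<ge>n. x \<in> g m"
    using down_ext[of n f x] f x by auto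
  have gx: "x \<in> g m" for m
  proof (cases "n \<le> m")
    case True then show ?thesis using g(4) by blast
  next
    case False
    hence "g n \<subseteq> g m" using chain_dec[of g m n] g(2) by simp
    then show ?thesis using g(4) by blast
  qed
  have qP: "(\<lambda>m. (g m, g (Suc m))) \<in> path_space V"
    by (rule chain_ps) (use g in blast)+
  have "g n = w" using g(3) f(3) by simp
  show ?thesis
    by (rule bexI[OF _ qP]) (simp add: \<open>g n = w\<close> gx)
qed

end

definition multi :: "'a set set \<Rightarrow> 'a set" where
  "multi W = \<Union>{v \<inter> w | v w. v \<in> W \<and> w \<in> W \<and> v \<noteq> w}"

lemma finite_pairs: "finite W \<Longrightarrow> finite {f v w | v w. v \<in> W \<and> w \<in> W \<and> v \<noteq> w}"
proof -
  assume "finite W"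
  hence "finite ((\<lambda>(v,w). f v w) ` (W \<times> W))" by simp
  moreover have "{f v w | v w. v \<in> W \<and> w \<in> W \<and> v \<noteq> w} \<subseteq> (\<lambda>(v,w). f v w) ` (W \<times> W)" by auto
  ultimately show ?thesis by (rule finite_subset[rotated])
qed

context
  fixes V :: "nat \<Rightarrow> 'a::metric_space set set"
  assumes cpt: "compact (UNIV :: 'a set)"
    and R: "refining_sequence V"
    and E: "essential_graph V"
begin

lemma multi_closed: "closed (multi (V n))"
  unfolding multi_def
  by (rule closed_Union) (use finite_pairs[OF fin[OF cpt R E]] cl[OF cpt R E] in auto)

lemma inj_iff:
  assumes p: "p \<in> path_space V"
  shows "p \<in> injectivity_set V \<longleftrightarrow> (\<forall>n. path_proj p \<notin> multi (V n))"
proof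
  assume "p \<in> injectivity_set V"
  hence c: "card {q \<in> path_space V. path_proj q = path_proj p} = 1"
    by (simp add: injectivity_set_def)
  then obtain a where a: "{q \<in> path_space V. path_proj q = path_proj p} = {a}"
    by (rule card_1_singletonE)
  show "\<forall>n. path_proj p \<notin> multi (V n)"
  proof (intro allI notI)
    fix n assume "path_proj p \<in> multi (V n)"
    then obtain v w where vw: "v \<in> V n" "w \<in> V n" "v \<noteq> w" "path_proj p \<in> v" "path_proj p \<in> w"
      unfolding multi_def by blast
    obtain q1 where q1: "q1 \<in> path_space V" "fst (q1 n) = v" "\<forall>m. path_proj p \<in> snd (q1 m)"
      using path_through[OF cpt R E vw(1,4)] by blast
    obtain q2 where q2: "q2 \<in> path_space V" "fst (q2 n) = w" "\<forall>m. path_proj p \<in> snd (q2 m)"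
      using path_through[OF cpt R E vw(2,5)] by blast
    have "q1 \<in> {q \<in> path_space V. path_proj q = path_proj p}"
      using q1 proj_iff[OF cpt R E q1(1)] by simp
    moreover have "q2 \<in> {q \<in> path_space V. path_proj q = path_proj p}"
      using q2 proj_iff[OF cpt R E q2(1)] by simp
    ultimately have "q1 = q2" unfolding a by simp
    thus False using q1(2) q2(2) vw(3) by simp
  qed
next
  assume U: "\<forall>n. path_proj p \<notin> multi (V n)"
  define x where "x = path_proj p"
  have px: "\<forall>m. x \<in> fst (p m)"
    using proj_iff[OF cpt R E p, of x] snd_fst_iff[OF cpt R E p, of x] x_def by simp
  have "{q \<in> path_space V. path_proj q = x} = {p}"
  proof (intro equalityI subsetI)
    fix q assume qin: "q \<in> {q \<in> path_space V. path_proj q = x}"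
    hence qP: "q \<in> path_space V" and qx: "path_proj q = x" by auto
    have "\<forall>m. x \<in> snd (q m)" using proj_iff[OF cpt R E qP, of x] qx by simp
    hence q2: "\<forall>m. x \<in> fst (q m)" using snd_fst_iff[OF cpt R E qP, of x] by simp
    have F: "fst (q m) = fst (p m)" for m
    proof (rule ccontr)
      assume ne: "fst (q m) \<noteq> fst (p m)"
      have "fst (q m) \<inter> fst (p m) \<in> {v \<inter> w | v w. v \<in> V m \<and> w \<in> V m \<and> v \<noteq> w}"
        using ps_props(1)[OF qP, of m] ps_props(1)[OF p, of m] ne by blast
      moreover have "x \<in> fst (q m) \<inter> fst (p m)" using q2 px by blast
      ultimately have "x \<in> multi (V m)" unfolding multi_def by blast
      thus False using U x_def by blast
    qed
    have qm: "q m = p m" for m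
      using F[of m] F[of "Suc m"] ps_props(4)[OF qP, of m] ps_props(4)[OF p, of m]
      by (simp add: prod_eq_iff)
    have "q = p" using qm by (simp add: fun_eq_iff)
    thus "q \<in> {p}" by simp
  next
    fix q assume "q \<in> {p}"
    thus "q \<in> {q \<in> path_space V. path_proj q = x}" using p x_def by simp
  qed
  thus "p \<in> injectivity_set V" using p x_def by (simp add: injectivity_set_def)
qed

lemma S_open:
  "openin (path_topology V) {p \<in> path_space V. path_proj p \<notin> multi (V n)}"
proof -
  define S where "S = {p \<in> path_space V. path_proj p \<notin> multi (V n)}"
  have key: "\<exists>C\<in>cylinder_sets V. p \<in> C \<and> C \<subseteq> S" if pS: "p \<in> S" for p
  proof -
    have p: "p \<in> path_space V" using pS S_def by simp
    define x where "x = path_proj p"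
    have "open (- multi (V n))" using multi_closed by auto
    moreover have "x \<in> - multi (V n)" using pS S_def x_def by simp
    ultimately obtain r where r: "r > 0" "ball x r \<subseteq> - multi (V n)"
      using open_contains_ball by blast
    have "eventually (\<lambda>m. Max (diameter ` V m) < r) sequentially"
      using order_tendstoD(2)[OF lim[OF cpt R E] r(1)] .
    then obtain N where N: "\<And>m. m \<ge> N \<Longrightarrow> Max (diameter ` V m) < r"
      unfolding eventually_sequentially by blast
    have xs: "x \<in> snd (p N)" using proj_iff[OF cpt R E p, of x] x_def by simp
    have sub: "snd (p N) \<subseteq> - multi (V n)"
    proof
      fix y assume y: "y \<in> snd (p N)"
      have "dist x y \<le> Max (diameter ` V (Suc N))"
        using diam_le[OF cpt R E ps_props(2)[OF p] xs y] .
      also have "\<dots> < r" using N by simp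
      finally have "y \<in> ball x r" by simp
      thus "y \<in> - multi (V n)" using r(2) by blast
    qed
    define C where "C = {q \<in> path_space V. \<forall>i<Suc N. q i = p i}"
    have "C \<in> cylinder_sets V" unfolding cylinder_sets_def C_def using p
      by (intro CollectI exI[of _ p] exI[of _ "Suc N"] conjI refl)
    moreover have "p \<in> C" using p C_def by simp
    moreover have "C \<subseteq> S"
    proof
      fix q assume q: "q \<in> C"
      hence qP: "q \<in> path_space V" and "q N = p N" using C_def by auto
      have "\<forall>n. path_proj q \<in> snd (q n)" using proj_iff[OF cpt R E qP, of "path_proj q"] by simp
      hence "path_proj q \<in> snd (p N)" using \<open>q N = p N\<close> by metis
      thus "q \<in> S" using sub qP S_def by auto
    qed
    ultimately show ?thesis by blast
  qed
  have eq: "\<Union>{C \<in> cylinder_sets V. C \<subseteq> S} = S"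
  proof (intro equalityI subsetI)
    fix p assume "p \<in> S"
    then obtain C where "C \<in> cylinder_sets V" "p \<in> C" "C \<subseteq> S" using key by blast
    thus "p \<in> \<Union>{C \<in> cylinder_sets V. C \<subseteq> S}" by blast
  qed blast
  have "generate_topology_on (cylinder_sets V) (\<Union>{C \<in> cylinder_sets V. C \<subseteq> S})"
    by (rule generate_topology_on.UN) (auto intro: generate_topology_on.Basis)
  hence "generate_topology_on (cylinder_sets V) S" unfolding eq .
  thus ?thesis
    unfolding path_topology_def openin_topology_generated_by_iff S_def .
qed

lemma core:
  assumes p: "p \<in> path_space V"
  shows "\<exists>q\<in>injectivity_set V. q \<in> path_space V \<and> (\<forall>i<k. q i = p i)"
proof -
  define v where "v = fst (p k)"
  have v: "v \<in> V k" using ps_props(1)[OF p] v_def by simp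
  define Es where "Es n = (\<Union>u\<in>V n. ess V n u)" for n
  have ess_open: "open (ess V n u)" for n u
  proof -
    have "closed (\<Union>(overlapping_set V n))"
      unfolding overlapping_set_def
      by (rule closed_Union) (use finite_pairs[OF fin[OF cpt R E]] in auto)
    thus ?thesis unfolding ess_def by auto
  qed
  have "euclidean closure_of \<Inter>(range Es) = topspace euclidean"
  proof (rule Baire_category)
    have "compact_space (euclidean::'a topology)" using cpt by (simp add: compact_space_def)
    thus "completely_metrizable_space (euclidean::'a topology) \<or>
        locally_compact_space (euclidean::'a topology) \<and> regular_space (euclidean::'a topology)"
      using compact_imp_locally_compact_space regular_space_euclidean by blast
    show "countable (range Es)" by simp
    fix T assume "T \<in> range Es"
    then obtain n where T: "T = Es n" by blast
    show "openin euclidean T \<and> euclidean closure_of T = topspace euclidean"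
      using E ess_open unfolding T Es_def essential_graph_def by auto
  qed
  hence cU: "closure (\<Inter>(range Es)) = UNIV" by simp
  have "ess V k v \<inter> closure (\<Inter>(range Es)) \<noteq> {}"
    using essne[OF cpt R E v] cU by simp
  hence "ess V k v \<inter> \<Inter>(range Es) \<noteq> {}"
    using open_Int_closure_eq_empty[OF ess_open, of k v "\<Inter>(range Es)"] by simp
  then obtain x where x1: "x \<in> ess V k v" and x2: "x \<in> \<Inter>(range Es)" by blast
  have x: "x \<in> ess V k v" "\<forall>n. x \<in> Es n" using x1 x2 by auto
  have xv: "x \<in> v" using x(1) interior_subset unfolding ess_def by blast
  have xU: "x \<notin> multi (V n)" for n
  proof
    assume "x \<in> multi (V n)"
    then obtain a b where ab: "a \<in> V n" "b \<in> V n" "a \<noteq> b" "x \<in> a" "x \<in> b"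
      unfolding multi_def by blast
    obtain u where u: "u \<in> V n" "x \<in> ess V n u" using x(2) unfolding Es_def by blast
    have xu: "x \<in> u" using u(2) interior_subset unfolding ess_def by blast
    have "\<exists>c. c \<in> V n \<and> c \<noteq> u \<and> x \<in> c"
    proof (cases "a = u")
      case True
      hence "b \<noteq> u" using ab(3) by simp
      thus ?thesis using ab(2,5) by blast
    next
      case False thus ?thesis using ab(1,4) by blast
    qed
    then obtain c where c: "c \<in> V n" "c \<noteq> u" "x \<in> c" by blast
    have "closure u \<inter> closure c \<in> overlapping_set V n"
      unfolding overlapping_set_def using u(1) c by blast
    moreover have "x \<in> closure u \<inter> closure c" using xu c(3) closure_subset by blast
    ultimately show False using u(2) unfolding ess_def by blast
  qed
  have f1: "\<And>m. m \<le> k \<Longrightarrow> fst (p m) \<in> V m" using ps_props(1)[OF p] by blast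
  have f2: "\<And>m. m < k \<Longrightarrow> fst (p (Suc m)) \<subseteq> fst (p m)"
    by (simp add: ps_props(3,4)[OF p])
  have xk: "x \<in> fst (p k)" using xv v_def by simp
  obtain g where g: "\<forall>m. g m \<in> V m" "\<forall>m. g (Suc m) \<subseteq> g m" "\<forall>m\<le>k. g m = fst (p m)"
      "\<forall>m\<ge>k. x \<in> g m"
    using down_ext[OF cpt R E f1 f2 xk] by blast
  have gx: "x \<in> g m" for m
  proof (cases "k \<le> m")
    case True then show ?thesis using g(4) by blast
  next
    case False
    hence "g k \<subseteq> g m" using chain_dec[OF cpt R E, of g m k] g(2) False by simp
    then show ?thesis using g(4) by blast
  qed
  define q where "q = (\<lambda>m. (g m, g (Suc m)))"
  have qP: "q \<in> path_space V" unfolding q_def using chain_ps[where f=g and V=V] g by auto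
  have "path_proj q = x" using proj_iff[OF cpt R E qP] gx q_def by simp
  hence "q \<in> injectivity_set V" using inj_iff[OF qP] xU by simp
  moreover have "q i = p i" if "i < k" for i
    using that g(3) ps_props(4)[OF p, of i] q_def by (simp add: prod_eq_iff)
  ultimately show ?thesis using qP by blast
qed

end

lemma open_cyl:
  "generate_topology_on (cylinder_sets V) T \<Longrightarrow> p \<in> T \<Longrightarrow>
    \<exists>k. {q \<in> path_space V. \<forall>i<k. q i = p i} \<subseteq> T"
proof (induction arbitrary: p rule: generate_topology_on.induct)
  case Empty then show ?case by simp
next
  case (Int a b)
  have pa: "p \<in> a" and pb: "p \<in> b" using Int.prems by auto
  obtain k1 where k1: "{q \<in> path_space V. \<forall>i<k1. q i = p i} \<subseteq> a" using Int.IH(1)[OF pa] by blast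
  obtain k2 where k2: "{q \<in> path_space V. \<forall>i<k2. q i = p i} \<subseteq> b" using Int.IH(2)[OF pb] by blast
  have "{q \<in> path_space V. \<forall>i<max k1 k2. q i = p i} \<subseteq> {q \<in> path_space V. \<forall>i<k1. q i = p i}"
    by auto
  moreover have "{q \<in> path_space V. \<forall>i<max k1 k2. q i = p i} \<subseteq> {q \<in> path_space V. \<forall>i<k2. q i = p i}"
    by auto
  ultimately have "{q \<in> path_space V. \<forall>i<max k1 k2. q i = p i} \<subseteq> a \<inter> b"
    using k1 k2 by (meson Int_greatest subset_trans)
  then show ?case by (rule exI)
next
  case (UN K)
  then obtain A where A: "A \<in> K" "p \<in> A" by blast
  then obtain j where j: "{q \<in> path_space V. \<forall>i<j. q i = p i} \<subseteq> A" using UN.IH[OF A] by blast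
  hence "{q \<in> path_space V. \<forall>i<j. q i = p i} \<subseteq> \<Union>K" using A(1) by blast
  then show ?case by (rule exI)
next
  case (Basis s)
  then obtain p' k where s: "s = {q \<in> path_space V. \<forall>i<k. q i = p' i}"
    unfolding cylinder_sets_def by blast
  hence "\<forall>i<k. p i = p' i" using Basis.prems by simp
  hence "{q \<in> path_space V. \<forall>i<k. q i = p i} = s" using s by auto
  then show ?case by blast
qed

lemma topspace_pt: "topspace (path_topology V) = path_space V"
proof -
  have "\<Union>(cylinder_sets V) = path_space V"
  proof
    show "\<Union>(cylinder_sets V) \<subseteq> path_space V" unfolding cylinder_sets_def by blast
    show "path_space V \<subseteq> \<Union>(cylinder_sets V)"
    proof
      fix p assume "p \<in> path_space V"
      hence "{q \<in> path_space V. \<forall>i<0. q i = p i} \<in> cylinder_sets V"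
        unfolding cylinder_sets_def by blast
      thus "p \<in> \<Union>(cylinder_sets V)" using \<open>p \<in> path_space V\<close> by auto
    qed
  qed
  thus ?thesis by (simp add: path_topology_def)
qed

theorem proposition2p23:
  fixes V :: "nat \<Rightarrow> 'a::metric_space set set"
  assumes "compact (UNIV :: 'a set)"
    and "infinite (UNIV :: 'a set)"
    and "refining_sequence V"
    and "essential_graph V"
  shows "gdelta_in (path_topology V) (injectivity_set V)
       \<and> (path_topology V) closure_of (injectivity_set V) = topspace (path_topology V)"
proof -
  note cpt = assms(1) and R = assms(3) and E = assms(4)
  have top: "topspace (path_topology V) = path_space V" by (rule topspace_pt)
  have I_eq: "injectivity_set V =
      \<Inter>(range (\<lambda>n. {p \<in> path_space V. path_proj p \<notin> multi (V n)}))"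
  proof (intro equalityI subsetI)
    fix p assume pI: "p \<in> injectivity_set V"
    hence pP: "p \<in> path_space V" by (simp add: injectivity_set_def)
    have "\<forall>n. path_proj p \<notin> multi (V n)" using inj_iff[OF cpt R E pP] pI by blast
    thus "p \<in> \<Inter>(range (\<lambda>n. {p \<in> path_space V. path_proj p \<notin> multi (V n)}))"
      using pP by blast
  next
    fix p assume a: "p \<in> \<Inter>(range (\<lambda>n. {p \<in> path_space V. path_proj p \<notin> multi (V n)}))"
    hence pP: "p \<in> path_space V" by auto
    have "\<forall>n. path_proj p \<notin> multi (V n)" using a by blast
    thus "p \<in> injectivity_set V" using inj_iff[OF cpt R E pP] by blast
  qed
  have g: "gdelta_in (path_topology V) (injectivity_set V)"
    unfolding I_eq
  proof (rule gdelta_in_Inter)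
    show "countable (range (\<lambda>n. {p \<in> path_space V. path_proj p \<notin> multi (V n)}))" by simp
    show "range (\<lambda>n. {p \<in> path_space V. path_proj p \<notin> multi (V n)}) \<noteq> {}" by simp
    fix S assume "S \<in> range (\<lambda>n. {p \<in> path_space V. path_proj p \<notin> multi (V n)})"
    then obtain n where "S = {p \<in> path_space V. path_proj p \<notin> multi (V n)}" by blast
    thus "gdelta_in (path_topology V) S" using open_imp_gdelta_in[OF S_open[OF cpt R E, of n]] by simp
  qed
  have d: "path_topology V closure_of injectivity_set V \<subseteq> topspace (path_topology V)"
    by (rule closure_of_subset_topspace)
  have d2: "topspace (path_topology V) \<subseteq> path_topology V closure_of injectivity_set V"
  proof
    fix p assume "p \<in> topspace (path_topology V)"
    hence p: "p \<in> path_space V" using top by simp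
    show "p \<in> path_topology V closure_of injectivity_set V"
      unfolding in_closure_of
    proof (intro conjI allI impI)
      show "p \<in> topspace (path_topology V)" using p top by simp
      fix T assume T: "p \<in> T \<and> openin (path_topology V) T"
      hence "generate_topology_on (cylinder_sets V) T" "p \<in> T"
        unfolding path_topology_def openin_topology_generated_by_iff by auto
      then obtain k where k: "{q \<in> path_space V. \<forall>i<k. q i = p i} \<subseteq> T"
        using open_cyl by blast
      obtain q where "q \<in> injectivity_set V" "q \<in> path_space V" "\<forall>i<k. q i = p i"
        using core[OF cpt R E p, of k] by blast
      thus "\<exists>y. y \<in> injectivity_set V \<and> y \<in> T" using k by blast
    qed
  qed
  have "path_topology V closure_of injectivity_set V = topspace (path_topology V)"
    using d d2 by (rule antisym)
  thus ?thesis using g by simp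
qed

end
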